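(* Let $A$ and $B$ be rings, $f: A\to B$ a ring homomorphism and $J$ a proper ideal of $B$. Let $S$ be the set of regular central elements of $B$ (central elements that are not zero divisors), and assume $J\cap S\neq\varnothing$. Then $A\bowtie^{f}J$ is an Armendariz ring if and only if both $A$ and $f(A)+J$ are Armendariz rings.
   Context: All rings are associative with identity (not necessarily commutative), ring homomorphisms are unital, and ideals are two-sided. For a ring homomorphism $f:A\to B$ and an ideal $J$ of $B$, the amalgamation is the subring $A\bowtie^{f}J=\{(a,f(a)+j)\mid a\in A,\ j\in J\}$ of $A\times B$; $f(A)+J=\{f(a)+j: a\in A, j\in J\}$ is a subring of $B$. A ring $R$ is Armendariz if whenever $p(x)=\sum_{i=0}^n a_ix^i$ and $q(x)=\sum_{j=0}^m b_jx^j$ in $R[x]$ satisfy $p(x)q(x)=0$, then $a_ib_j=0$ for all $i,j$. *)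

theory Defs
  imports "HOL-Algebra.Algebra"
begin

definition armendariz :: "('a, 'm) ring_scheme \<Rightarrow> bool" where
  "armendariz R \<longleftrightarrow>
     (\<forall>p \<in> carrier (UP R). \<forall>q \<in> carrier (UP R).
        p \<otimes>\<^bsub>UP R\<^esub> q = \<zero>\<^bsub>UP R\<^esub> \<longrightarrow>
        (\<forall>i j. coeff (UP R) p i \<otimes>\<^bsub>R\<^esub> coeff (UP R) q j = \<zero>\<^bsub>R\<^esub>))"

definition amalgamation ::
  "('a, 'm) ring_scheme \<Rightarrow> ('b, 'n) ring_scheme \<Rightarrow> ('a \<Rightarrow> 'b) \<Rightarrow> 'b set \<Rightarrow> ('a \<times> 'b) ring" where
  "amalgamation A B f J =
     (RDirProd A B)\<lparr>carrier := {(a, f a \<oplus>\<^bsub>B\<^esub> j) | a j. a \<in> carrier A \<and> j \<in> J}\<rparr>"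

definition image_plus_ideal ::
  "('a, 'm) ring_scheme \<Rightarrow> ('b, 'n) ring_scheme \<Rightarrow> ('a \<Rightarrow> 'b) \<Rightarrow> 'b set \<Rightarrow> ('b, 'n) ring_scheme" where
  "image_plus_ideal A B f J =
     B\<lparr>carrier := {f a \<oplus>\<^bsub>B\<^esub> j | a j. a \<in> carrier A \<and> j \<in> J}\<rparr>"

definition regular_central :: "('b, 'n) ring_scheme \<Rightarrow> 'b set" where
  "regular_central B =
     {s \<in> carrier B. (\<forall>x \<in> carrier B. s \<otimes>\<^bsub>B\<^esub> x = x \<otimes>\<^bsub>B\<^esub> s) \<and>
        (\<forall>x \<in> carrier B. s \<otimes>\<^bsub>B\<^esub> x = \<zero>\<^bsub>B\<^esub> \<longrightarrow> x = \<zero>\<^bsub>B\<^esub>) \<and>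
        (\<forall>x \<in> carrier B. x \<otimes>\<^bsub>B\<^esub> s = \<zero>\<^bsub>B\<^esub> \<longrightarrow> x = \<zero>\<^bsub>B\<^esub>)}"

end

theory Submission
  imports Defs
begin

lemma amal_simps:
  "carrier (amalgamation A B f J) = {(a, f a \<oplus>\<^bsub>B\<^esub> j) | a j. a \<in> carrier A \<and> j \<in> J}"
  "x \<otimes>\<^bsub>amalgamation A B f J\<^esub> y = (fst x \<otimes>\<^bsub>A\<^esub> fst y, snd x \<otimes>\<^bsub>B\<^esub> snd y)"
  "x \<oplus>\<^bsub>amalgamation A B f J\<^esub> y = (fst x \<oplus>\<^bsub>A\<^esub> fst y, snd x \<oplus>\<^bsub>B\<^esub> snd y)"
  "\<zero>\<^bsub>amalgamation A B f J\<^esub> = (\<zero>\<^bsub>A\<^esub>, \<zero>\<^bsub>B\<^esub>)"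
  "\<one>\<^bsub>amalgamation A B f J\<^esub> = (\<one>\<^bsub>A\<^esub>, \<one>\<^bsub>B\<^esub>)"
  by (auto simp: amalgamation_def RDirProd_def DirProd_def monoid.defs case_prod_beta)

lemma ipi_simps:
  "carrier (image_plus_ideal A B f J) = {f a \<oplus>\<^bsub>B\<^esub> j | a j. a \<in> carrier A \<and> j \<in> J}"
  "x \<otimes>\<^bsub>image_plus_ideal A B f J\<^esub> y = x \<otimes>\<^bsub>B\<^esub> y"
  "x \<oplus>\<^bsub>image_plus_ideal A B f J\<^esub> y = x \<oplus>\<^bsub>B\<^esub> y"
  "\<zero>\<^bsub>image_plus_ideal A B f J\<^esub> = \<zero>\<^bsub>B\<^esub>"
  by (auto simp: image_plus_ideal_def)

lemma amal_ring:
  assumes A: "ring A" and B: "ring B" and f: "f \<in> ring_hom A B" and J: "ideal J B"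
  shows "ring (amalgamation A B f J)"
proof -
  interpret A: ring A by fact
  interpret B: ring B by fact
  interpret J: ideal J B by fact
  interpret P: ring "RDirProd A B" using RDirProd_ring A B .
  have fc: "\<And>a. a \<in> carrier A \<Longrightarrow> f a \<in> carrier B" using f by (simp add: ring_hom_closed)
  have finv: "f (\<ominus>\<^bsub>A\<^esub> a) = \<ominus>\<^bsub>B\<^esub> f a" if "a \<in> carrier A" for a
  proof -
    have "f (\<ominus>\<^bsub>A\<^esub> a) \<oplus>\<^bsub>B\<^esub> f a = \<zero>\<^bsub>B\<^esub>"
      using that ring_hom_add[OF f, of "\<ominus>\<^bsub>A\<^esub> a" a] ring_hom_zero[OF f A B] by (simp add: A.l_neg)
    thus ?thesis using B.minus_equality that fc by simp
  qed
  let ?H = "{(a, f a \<oplus>\<^bsub>B\<^esub> j) | a j. a \<in> carrier A \<and> j \<in> J}"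
  have neg: "\<ominus>\<^bsub>RDirProd A B\<^esub> (x, y) = (\<ominus>\<^bsub>A\<^esub> x, \<ominus>\<^bsub>B\<^esub> y)" if "x \<in> carrier A" "y \<in> carrier B" for x y
  proof -
    have "(\<ominus>\<^bsub>A\<^esub> x, \<ominus>\<^bsub>B\<^esub> y) \<oplus>\<^bsub>RDirProd A B\<^esub> (x, y) = \<zero>\<^bsub>RDirProd A B\<^esub>"
      using that by (simp add: RDirProd_def DirProd_def monoid.defs A.l_neg B.l_neg)
    thus ?thesis using that P.minus_equality by (simp add: RDirProd_carrier)
  qed
  have "subring ?H (RDirProd A B)"
  proof (rule P.subringI)
    show "?H \<subseteq> carrier (RDirProd A B)" using fc J.Icarr by (auto simp: RDirProd_carrier)
    show "\<one>\<^bsub>RDirProd A B\<^esub> \<in> ?H"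
    proof -
      have "\<one>\<^bsub>RDirProd A B\<^esub> = (\<one>\<^bsub>A\<^esub>, f \<one>\<^bsub>A\<^esub> \<oplus>\<^bsub>B\<^esub> \<zero>\<^bsub>B\<^esub>)"
        by (simp add: RDirProd_def DirProd_def monoid.defs ring_hom_one[OF f])
      thus ?thesis using J.zero_closed A.one_closed by blast
    qed
    show "\<ominus>\<^bsub>RDirProd A B\<^esub> h \<in> ?H" if "h \<in> ?H" for h
    proof -
      obtain a j where h: "h = (a, f a \<oplus>\<^bsub>B\<^esub> j)" "a \<in> carrier A" "j \<in> J" using \<open>h \<in> ?H\<close> by blast
      have jc: "j \<in> carrier B" using h J.Icarr by blast
      have "\<ominus>\<^bsub>RDirProd A B\<^esub> h = (\<ominus>\<^bsub>A\<^esub> a, f (\<ominus>\<^bsub>A\<^esub> a) \<oplus>\<^bsub>B\<^esub> \<ominus>\<^bsub>B\<^esub> j)"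
        using h jc fc neg finv by (simp add: B.minus_add)
      thus ?thesis using h J.a_inv_closed by blast
    qed
    show "h1 \<otimes>\<^bsub>RDirProd A B\<^esub> h2 \<in> ?H" if hh: "h1 \<in> ?H" "h2 \<in> ?H" for h1 h2
    proof -
      obtain a j where h: "h1 = (a, f a \<oplus>\<^bsub>B\<^esub> j)" "a \<in> carrier A" "j \<in> J" using hh by blast
      obtain a' j' where h': "h2 = (a', f a' \<oplus>\<^bsub>B\<^esub> j')" "a' \<in> carrier A" "j' \<in> J" using hh by blast
      have jc: "j \<in> carrier B" "j' \<in> carrier B" using h h' J.Icarr by blast+
      let ?k = "f a \<otimes>\<^bsub>B\<^esub> j' \<oplus>\<^bsub>B\<^esub> (j \<otimes>\<^bsub>B\<^esub> f a' \<oplus>\<^bsub>B\<^esub> j \<otimes>\<^bsub>B\<^esub> j')"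
      have k: "?k \<in> J" using h h' jc fc
        by (simp add: J.I_l_closed J.I_r_closed J.a_closed)
      have "h1 \<otimes>\<^bsub>RDirProd A B\<^esub> h2 = (a \<otimes>\<^bsub>A\<^esub> a', f (a \<otimes>\<^bsub>A\<^esub> a') \<oplus>\<^bsub>B\<^esub> ?k)"
        using h h' jc fc ring_hom_mult[OF f]
        by (simp add: RDirProd_def DirProd_def monoid.defs B.l_distr B.r_distr B.a_assoc B.a_lcomm)
      thus ?thesis using k h h' by blast
    qed
    show "h1 \<oplus>\<^bsub>RDirProd A B\<^esub> h2 \<in> ?H" if hh: "h1 \<in> ?H" "h2 \<in> ?H" for h1 h2
    proof -
      obtain a j where h: "h1 = (a, f a \<oplus>\<^bsub>B\<^esub> j)" "a \<in> carrier A" "j \<in> J" using hh by blast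
      obtain a' j' where h': "h2 = (a', f a' \<oplus>\<^bsub>B\<^esub> j')" "a' \<in> carrier A" "j' \<in> J" using hh by blast
      have jc: "j \<in> carrier B" "j' \<in> carrier B" using h h' J.Icarr by blast+
      have "h1 \<oplus>\<^bsub>RDirProd A B\<^esub> h2 = (a \<oplus>\<^bsub>A\<^esub> a', f (a \<oplus>\<^bsub>A\<^esub> a') \<oplus>\<^bsub>B\<^esub> (j \<oplus>\<^bsub>B\<^esub> j'))"
        using h h' jc fc ring_hom_add[OF f]
        by (simp add: RDirProd_def DirProd_def monoid.defs B.a_ac)
      thus ?thesis using h h' J.a_closed by blast
    qed
  qed
  from P.subring_is_ring[OF this] show ?thesis by (simp add: amalgamation_def)
qed

lemma ipi_ring:
  assumes A: "ring A" and B: "ring B" and f: "f \<in> ring_hom A B" and J: "ideal J B"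
  shows "ring (image_plus_ideal A B f J)"
proof -
  interpret A: ring A by fact
  interpret B: ring B by fact
  interpret J: ideal J B by fact
  have fc: "\<And>a. a \<in> carrier A \<Longrightarrow> f a \<in> carrier B" using f by (simp add: ring_hom_closed)
  have finv: "f (\<ominus>\<^bsub>A\<^esub> a) = \<ominus>\<^bsub>B\<^esub> f a" if "a \<in> carrier A" for a
  proof -
    have "f (\<ominus>\<^bsub>A\<^esub> a) \<oplus>\<^bsub>B\<^esub> f a = \<zero>\<^bsub>B\<^esub>"
      using that ring_hom_add[OF f, of "\<ominus>\<^bsub>A\<^esub> a" a] ring_hom_zero[OF f A B] by (simp add: A.l_neg)
    thus ?thesis using B.minus_equality that fc by simp
  qed
  let ?H = "{f a \<oplus>\<^bsub>B\<^esub> j | a j. a \<in> carrier A \<and> j \<in> J}"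
  have "subring ?H B"
  proof (rule B.subringI)
    show "?H \<subseteq> carrier B" using fc J.Icarr by auto
    show "\<one>\<^bsub>B\<^esub> \<in> ?H"
    proof -
      have "\<one>\<^bsub>B\<^esub> = f \<one>\<^bsub>A\<^esub> \<oplus>\<^bsub>B\<^esub> \<zero>\<^bsub>B\<^esub>"
        by (simp add: ring_hom_one[OF f])
      thus ?thesis using J.zero_closed A.one_closed by blast
    qed
    show "\<ominus>\<^bsub>B\<^esub> h \<in> ?H" if "h \<in> ?H" for h
    proof -
      obtain a j where h: "h = f a \<oplus>\<^bsub>B\<^esub> j" "a \<in> carrier A" "j \<in> J" using \<open>h \<in> ?H\<close> by blast
      have jc: "j \<in> carrier B" using h J.Icarr by blast
      have "\<ominus>\<^bsub>B\<^esub> h = f (\<ominus>\<^bsub>A\<^esub> a) \<oplus>\<^bsub>B\<^esub> \<ominus>\<^bsub>B\<^esub> j"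
        using h jc fc finv by (simp add: B.minus_add)
      thus ?thesis using h J.a_inv_closed by blast
    qed
    show "h1 \<otimes>\<^bsub>B\<^esub> h2 \<in> ?H" if hh: "h1 \<in> ?H" "h2 \<in> ?H" for h1 h2
    proof -
      obtain a j where h: "h1 = f a \<oplus>\<^bsub>B\<^esub> j" "a \<in> carrier A" "j \<in> J" using hh by blast
      obtain a' j' where h': "h2 = f a' \<oplus>\<^bsub>B\<^esub> j'" "a' \<in> carrier A" "j' \<in> J" using hh by blast
      have jc: "j \<in> carrier B" "j' \<in> carrier B" using h h' J.Icarr by blast+
      let ?k = "f a \<otimes>\<^bsub>B\<^esub> j' \<oplus>\<^bsub>B\<^esub> (j \<otimes>\<^bsub>B\<^esub> f a' \<oplus>\<^bsub>B\<^esub> j \<otimes>\<^bsub>B\<^esub> j')"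
      have k: "?k \<in> J" using h h' jc fc
        by (simp add: J.I_l_closed J.I_r_closed J.a_closed)
      have "h1 \<otimes>\<^bsub>B\<^esub> h2 = f (a \<otimes>\<^bsub>A\<^esub> a') \<oplus>\<^bsub>B\<^esub> ?k"
        using h h' jc fc ring_hom_mult[OF f]
        by (simp add: B.l_distr B.r_distr B.a_assoc B.a_lcomm)
      thus ?thesis using k h h' by blast
    qed
    show "h1 \<oplus>\<^bsub>B\<^esub> h2 \<in> ?H" if hh: "h1 \<in> ?H" "h2 \<in> ?H" for h1 h2
    proof -
      obtain a j where h: "h1 = f a \<oplus>\<^bsub>B\<^esub> j" "a \<in> carrier A" "j \<in> J" using hh by blast
      obtain a' j' where h': "h2 = f a' \<oplus>\<^bsub>B\<^esub> j'" "a' \<in> carrier A" "j' \<in> J" using hh by blast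
      have jc: "j \<in> carrier B" "j' \<in> carrier B" using h h' J.Icarr by blast+
      have "h1 \<oplus>\<^bsub>B\<^esub> h2 = f (a \<oplus>\<^bsub>A\<^esub> a') \<oplus>\<^bsub>B\<^esub> (j \<oplus>\<^bsub>B\<^esub> j')"
        using h h' jc fc ring_hom_add[OF f]
        by (simp add: B.a_ac)
      thus ?thesis using h h' J.a_closed by blast
    qed
  qed
  from B.subring_is_ring[OF this] show ?thesis by (simp add: image_plus_ideal_def)
qed

lemma UP_simps:
  "carrier (UP R) = up R"
  "\<zero>\<^bsub>UP R\<^esub> = (\<lambda>i. \<zero>\<^bsub>R\<^esub>)"
  "p \<in> up R \<Longrightarrow> coeff (UP R) p n = p n"
  "p \<in> up R \<Longrightarrow> q \<in> up R \<Longrightarrow> p \<otimes>\<^bsub>UP R\<^esub> q = (\<lambda>n. \<Oplus>\<^bsub>R\<^esub>i \<in> {..n}. p i \<otimes>\<^bsub>R\<^esub> q (n-i))"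
  by (simp_all add: UP_def)

lemma up_map:
  assumes "p \<in> up R" "h \<in> carrier R \<rightarrow> carrier S" "h \<zero>\<^bsub>R\<^esub> = \<zero>\<^bsub>S\<^esub>"
  shows "(\<lambda>n. h (p n)) \<in> up S"
proof -
  from assms(1) obtain n where p: "\<And>i. p i \<in> carrier R" "bound \<zero>\<^bsub>R\<^esub> n p" unfolding up_def by auto
  have "bound \<zero>\<^bsub>S\<^esub> n (\<lambda>n. h (p n))" using p(2) assms(3) by (auto simp: bound_def)
  thus ?thesis using p(1) assms(2) unfolding up_def by auto
qed

lemma finsum_map:
  assumes R: "ring R" and S: "ring S" and g: "g \<in> carrier R \<rightarrow> carrier S"
    and gadd: "\<And>x y. x \<in> carrier R \<Longrightarrow> y \<in> carrier R \<Longrightarrow> g (x \<oplus>\<^bsub>R\<^esub> y) = g x \<oplus>\<^bsub>S\<^esub> g y"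
    and g0: "g \<zero>\<^bsub>R\<^esub> = \<zero>\<^bsub>S\<^esub>" and I: "finite I"
  shows "F \<in> I \<rightarrow> carrier R \<Longrightarrow> g (finsum R F I) = finsum S (\<lambda>i. g (F i)) I"
proof -
  interpret R: ring R by fact
  interpret S: ring S by fact
  show "F \<in> I \<rightarrow> carrier R \<Longrightarrow> g (finsum R F I) = finsum S (\<lambda>i. g (F i)) I"
  using I
proof (induction I rule: finite_induct)
  case empty
  then show ?case using R.finsum_empty S.finsum_empty g0 by simp
next
  case (insert x I)
  have F: "F \<in> I \<rightarrow> carrier R" "F x \<in> carrier R" using insert.prems by auto
  have gF: "(\<lambda>i. g (F i)) \<in> I \<rightarrow> carrier S" "g (F x) \<in> carrier S" using F g by auto
  have "g (finsum R F (insert x I)) = g (F x \<oplus>\<^bsub>R\<^esub> finsum R F I)"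
    using R.finsum_insert[OF insert.hyps F] by simp
  also have "\<dots> = g (F x) \<oplus>\<^bsub>S\<^esub> g (finsum R F I)"
    using gadd F R.finsum_closed[OF F(1)] by simp
  also have "\<dots> = finsum S (\<lambda>i. g (F i)) (insert x I)"
    using insert.IH[OF F(1)] S.finsum_insert[OF insert.hyps gF] by simp
  finally show ?case .
qed
qed

lemma map_mult:
  assumes R: "ring R" and S: "ring S"
    and h: "h \<in> carrier R \<rightarrow> carrier S" and h0: "h \<zero>\<^bsub>R\<^esub> = \<zero>\<^bsub>S\<^esub>"
    and g: "g \<in> carrier R \<rightarrow> carrier S"
    and gadd: "\<And>x y. x \<in> carrier R \<Longrightarrow> y \<in> carrier R \<Longrightarrow> g (x \<oplus>\<^bsub>R\<^esub> y) = g x \<oplus>\<^bsub>S\<^esub> g y"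
    and g0: "g \<zero>\<^bsub>R\<^esub> = \<zero>\<^bsub>S\<^esub>"
    and hg: "\<And>x y. x \<in> carrier R \<Longrightarrow> y \<in> carrier R \<Longrightarrow> h x \<otimes>\<^bsub>S\<^esub> h y = g (x \<otimes>\<^bsub>R\<^esub> y)"
    and p: "p \<in> up R" and q: "q \<in> up R"
  shows "(\<lambda>n. h (p n)) \<otimes>\<^bsub>UP S\<^esub> (\<lambda>n. h (q n)) = (\<lambda>n. g ((p \<otimes>\<^bsub>UP R\<^esub> q) n))"
proof -
  interpret R: ring R by fact
  have pc: "\<And>i. p i \<in> carrier R" "\<And>i. q i \<in> carrier R" using p q unfolding up_def by auto
  show ?thesis
  proof (rule ext)
    fix n
    have "((\<lambda>n. h (p n)) \<otimes>\<^bsub>UP S\<^esub> (\<lambda>n. h (q n))) n = (\<Oplus>\<^bsub>S\<^esub>i \<in> {..n}. h (p i) \<otimes>\<^bsub>S\<^esub> h (q (n-i)))"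
      using UP_simps(4)[OF up_map[OF p h h0] up_map[OF q h h0]] by simp
    also have "\<dots> = (\<Oplus>\<^bsub>S\<^esub>i \<in> {..n}. g (p i \<otimes>\<^bsub>R\<^esub> q (n-i)))"
      using hg pc by simp
    also have "\<dots> = g (\<Oplus>\<^bsub>R\<^esub>i \<in> {..n}. p i \<otimes>\<^bsub>R\<^esub> q (n-i))"
      by (rule sym, rule finsum_map[OF R S g gadd g0]) (use pc R.m_closed in auto)
    also have "\<dots> = g ((p \<otimes>\<^bsub>UP R\<^esub> q) n)"
      using UP_simps(4)[OF p q] by simp
    finally show "((\<lambda>n. h (p n)) \<otimes>\<^bsub>UP S\<^esub> (\<lambda>n. h (q n))) n = g ((p \<otimes>\<^bsub>UP R\<^esub> q) n)" .
  qed
qed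

lemma armendariz_transfer:
  assumes R: "ring R" and S: "ring S"
    and h: "h \<in> carrier R \<rightarrow> carrier S" and h0: "h \<zero>\<^bsub>R\<^esub> = \<zero>\<^bsub>S\<^esub>"
    and g: "g \<in> carrier R \<rightarrow> carrier S"
    and gadd: "\<And>x y. x \<in> carrier R \<Longrightarrow> y \<in> carrier R \<Longrightarrow> g (x \<oplus>\<^bsub>R\<^esub> y) = g x \<oplus>\<^bsub>S\<^esub> g y"
    and g0: "g \<zero>\<^bsub>R\<^esub> = \<zero>\<^bsub>S\<^esub>"
    and hg: "\<And>x y. x \<in> carrier R \<Longrightarrow> y \<in> carrier R \<Longrightarrow> h x \<otimes>\<^bsub>S\<^esub> h y = g (x \<otimes>\<^bsub>R\<^esub> y)"
    and ginj: "inj_on g (carrier R)"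
    and arm: "armendariz S"
  shows "armendariz R"
  unfolding armendariz_def
proof (intro ballI impI allI)
  interpret R: ring R by fact
  fix p q i j
  assume p: "p \<in> carrier (UP R)" and q: "q \<in> carrier (UP R)" and pq: "p \<otimes>\<^bsub>UP R\<^esub> q = \<zero>\<^bsub>UP R\<^esub>"
  have p': "p \<in> up R" and q': "q \<in> up R" using p q by (simp_all add: UP_simps)
  have pc: "\<And>i. p i \<in> carrier R" "\<And>i. q i \<in> carrier R" using p' q' unfolding up_def by auto
  have P: "(\<lambda>n. h (p n)) \<in> up S" and Q: "(\<lambda>n. h (q n)) \<in> up S"
    using up_map[OF p' h h0] up_map[OF q' h h0] .
  have "(\<lambda>n. h (p n)) \<otimes>\<^bsub>UP S\<^esub> (\<lambda>n. h (q n)) = \<zero>\<^bsub>UP S\<^esub>"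
    using map_mult[OF R S h h0 g gadd g0 hg p' q'] pq g0 by (simp add: UP_simps)
  then have "h (p i) \<otimes>\<^bsub>S\<^esub> h (q j) = \<zero>\<^bsub>S\<^esub>"
    using arm P Q unfolding armendariz_def by (force simp: UP_simps)
  then have "g (p i \<otimes>\<^bsub>R\<^esub> q j) = g \<zero>\<^bsub>R\<^esub>" using hg pc g0 by simp
  then have "p i \<otimes>\<^bsub>R\<^esub> q j = \<zero>\<^bsub>R\<^esub>"
    using ginj pc R.m_closed R.zero_closed by (simp add: inj_on_def)
  thus "coeff (UP R) p i \<otimes>\<^bsub>R\<^esub> coeff (UP R) q j = \<zero>\<^bsub>R\<^esub>" using p' q' by (simp add: UP_simps)
qed

lemma hom_arm_zero:
  assumes R: "ring R" and S: "ring S"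
    and h: "h \<in> carrier R \<rightarrow> carrier S" and h0: "h \<zero>\<^bsub>R\<^esub> = \<zero>\<^bsub>S\<^esub>"
    and hadd: "\<And>x y. x \<in> carrier R \<Longrightarrow> y \<in> carrier R \<Longrightarrow> h (x \<oplus>\<^bsub>R\<^esub> y) = h x \<oplus>\<^bsub>S\<^esub> h y"
    and hmul: "\<And>x y. x \<in> carrier R \<Longrightarrow> y \<in> carrier R \<Longrightarrow> h x \<otimes>\<^bsub>S\<^esub> h y = h (x \<otimes>\<^bsub>R\<^esub> y)"
    and arm: "armendariz S"
    and p: "p \<in> carrier (UP R)" and q: "q \<in> carrier (UP R)" and pq: "p \<otimes>\<^bsub>UP R\<^esub> q = \<zero>\<^bsub>UP R\<^esub>"
  shows "h (p i) \<otimes>\<^bsub>S\<^esub> h (q j) = \<zero>\<^bsub>S\<^esub>"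
proof -
  have p': "p \<in> up R" and q': "q \<in> up R" using p q by (simp_all add: UP_simps)
  have P: "(\<lambda>n. h (p n)) \<in> up S" and Q: "(\<lambda>n. h (q n)) \<in> up S"
    using up_map[OF p' h h0] up_map[OF q' h h0] .
  have "(\<lambda>n. h (p n)) \<otimes>\<^bsub>UP S\<^esub> (\<lambda>n. h (q n)) = \<zero>\<^bsub>UP S\<^esub>"
    using map_mult[OF R S h h0 h hadd h0 hmul p' q'] pq h0 by (simp add: UP_simps)
  then show ?thesis
    using arm P Q unfolding armendariz_def by (force simp: UP_simps)
qed

theorem theorem2p2:
  fixes A :: "('a, 'm) ring_scheme" and B :: "('b, 'n) ring_scheme"
    and f :: "'a \<Rightarrow> 'b" and J :: "'b set"
  assumes "ring A" and "ring B"
    and "f \<in> ring_hom A B"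
    and "ideal J B" and "J \<noteq> carrier B"
    and "J \<inter> regular_central B \<noteq> {}"
  shows "armendariz (amalgamation A B f J) \<longleftrightarrow>
           armendariz A \<and> armendariz (image_plus_ideal A B f J)"
proof -
  note A = assms(1) and B = assms(2) and f = assms(3) and Jid = assms(4)
  interpret A: ring A by fact
  interpret B: ring B by fact
  interpret J: ideal J B by fact
  let ?C = "amalgamation A B f J" and ?D = "image_plus_ideal A B f J"
  have C: "ring ?C" using amal_ring[OF A B f Jid] .
  have D: "ring ?D" using ipi_ring[OF A B f Jid] .
  have fc: "\<And>a. a \<in> carrier A \<Longrightarrow> f a \<in> carrier B" using f by (simp add: ring_hom_closed)
  have f0: "f \<zero>\<^bsub>A\<^esub> = \<zero>\<^bsub>B\<^esub>" using ring_hom_zero[OF f A B] .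
  have Dsub: "x \<in> carrier B" if "x \<in> carrier ?D" for x
    using that fc J.Icarr by (auto simp: ipi_simps)
  have Cc: "(a, f a \<oplus>\<^bsub>B\<^esub> j) \<in> carrier ?C" if "a \<in> carrier A" "j \<in> J" for a j
    using that by (auto simp: amal_simps)
  have Cc2: "(\<zero>\<^bsub>A\<^esub>, j) \<in> carrier ?C" if "j \<in> J" for j
    using Cc[OF A.zero_closed that] f0 J.Icarr[OF that] by simp
  have Csub: "fst x \<in> carrier A \<and> snd x \<in> carrier ?D" if xC: "x \<in> carrier ?C" for x
  proof -
    obtain a j where "x = (a, f a \<oplus>\<^bsub>B\<^esub> j)" "a \<in> carrier A" "j \<in> J"
      using xC unfolding amal_simps by blast
    thus ?thesis unfolding ipi_simps by auto
  qed
  show ?thesis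
  proof
    assume armC: "armendariz ?C"
    have armA: "armendariz A"
    proof (rule armendariz_transfer[OF A C, where h = "\<lambda>a. (a, f a)" and g = "\<lambda>a. (a, f a)"])
      show "(\<lambda>a. (a, f a)) \<in> carrier A \<rightarrow> carrier ?C"
        using Cc[OF _ J.zero_closed] fc by auto
      thus "(\<lambda>a. (a, f a)) \<in> carrier A \<rightarrow> carrier ?C" .
      show "(\<zero>\<^bsub>A\<^esub>, f \<zero>\<^bsub>A\<^esub>) = \<zero>\<^bsub>?C\<^esub>" using f0 by (simp add: amal_simps)
      thus "(\<zero>\<^bsub>A\<^esub>, f \<zero>\<^bsub>A\<^esub>) = \<zero>\<^bsub>?C\<^esub>" .
      show "(x \<oplus>\<^bsub>A\<^esub> y, f (x \<oplus>\<^bsub>A\<^esub> y)) = (x, f x) \<oplus>\<^bsub>?C\<^esub> (y, f y)"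
        if "x \<in> carrier A" "y \<in> carrier A" for x y
        using that ring_hom_add[OF f] by (simp add: amal_simps)
      show "(x, f x) \<otimes>\<^bsub>?C\<^esub> (y, f y) = (x \<otimes>\<^bsub>A\<^esub> y, f (x \<otimes>\<^bsub>A\<^esub> y))"
        if "x \<in> carrier A" "y \<in> carrier A" for x y
        using that ring_hom_mult[OF f] by (simp add: amal_simps)
      show "inj_on (\<lambda>a. (a, f a)) (carrier A)" by (simp add: inj_on_def)
      show "armendariz ?C" by fact
    qed
    obtain s where s: "s \<in> J" "s \<in> regular_central B" using assms(6) by blast
    have sc: "s \<in> carrier B" using s(1) J.Icarr by blast
    have scomm: "\<And>x. x \<in> carrier B \<Longrightarrow> s \<otimes>\<^bsub>B\<^esub> x = x \<otimes>\<^bsub>B\<^esub> s"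
      and sreg: "\<And>x. x \<in> carrier B \<Longrightarrow> s \<otimes>\<^bsub>B\<^esub> x = \<zero>\<^bsub>B\<^esub> \<Longrightarrow> x = \<zero>\<^bsub>B\<^esub>"
      using s(2) unfolding regular_central_def mem_Collect_eq by blast+
    have scancel: "x = y" if "x \<in> carrier B" "y \<in> carrier B" "s \<otimes>\<^bsub>B\<^esub> x = s \<otimes>\<^bsub>B\<^esub> y" for x y
    proof -
      have "s \<otimes>\<^bsub>B\<^esub> (x \<ominus>\<^bsub>B\<^esub> y) = \<zero>\<^bsub>B\<^esub>"
        using that sc by (simp add: B.minus_eq B.r_distr B.r_minus B.r_neg)
      moreover have "x \<ominus>\<^bsub>B\<^esub> y \<in> carrier B" using that by simp
      ultimately have "x \<ominus>\<^bsub>B\<^esub> y = \<zero>\<^bsub>B\<^esub>" using sreg by blast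
      thus ?thesis using that by simp
    qed
    have armD: "armendariz ?D"
    proof (rule armendariz_transfer[OF D C, where h = "\<lambda>c. (\<zero>\<^bsub>A\<^esub>, s \<otimes>\<^bsub>B\<^esub> c)"
          and g = "\<lambda>c. (\<zero>\<^bsub>A\<^esub>, s \<otimes>\<^bsub>B\<^esub> (s \<otimes>\<^bsub>B\<^esub> c))"])
      show "(\<lambda>c. (\<zero>\<^bsub>A\<^esub>, s \<otimes>\<^bsub>B\<^esub> c)) \<in> carrier ?D \<rightarrow> carrier ?C"
        using Cc2 J.I_r_closed[OF s(1)] Dsub by auto
      show "(\<lambda>c. (\<zero>\<^bsub>A\<^esub>, s \<otimes>\<^bsub>B\<^esub> (s \<otimes>\<^bsub>B\<^esub> c))) \<in> carrier ?D \<rightarrow> carrier ?C"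
        using Cc2 J.I_r_closed[OF s(1)] Dsub sc by auto
      show "(\<zero>\<^bsub>A\<^esub>, s \<otimes>\<^bsub>B\<^esub> \<zero>\<^bsub>?D\<^esub>) = \<zero>\<^bsub>?C\<^esub>"
        using sc by (simp add: amal_simps ipi_simps)
      show "(\<zero>\<^bsub>A\<^esub>, s \<otimes>\<^bsub>B\<^esub> (s \<otimes>\<^bsub>B\<^esub> \<zero>\<^bsub>?D\<^esub>)) = \<zero>\<^bsub>?C\<^esub>"
        using sc by (simp add: amal_simps ipi_simps)
      show "(\<zero>\<^bsub>A\<^esub>, s \<otimes>\<^bsub>B\<^esub> (s \<otimes>\<^bsub>B\<^esub> (x \<oplus>\<^bsub>?D\<^esub> y))) =
            (\<zero>\<^bsub>A\<^esub>, s \<otimes>\<^bsub>B\<^esub> (s \<otimes>\<^bsub>B\<^esub> x)) \<oplus>\<^bsub>?C\<^esub> (\<zero>\<^bsub>A\<^esub>, s \<otimes>\<^bsub>B\<^esub> (s \<otimes>\<^bsub>B\<^esub> y))"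
        if "x \<in> carrier ?D" "y \<in> carrier ?D" for x y
        using Dsub[OF that(1)] Dsub[OF that(2)] sc by (simp add: amal_simps ipi_simps B.r_distr)
      show "(\<zero>\<^bsub>A\<^esub>, s \<otimes>\<^bsub>B\<^esub> x) \<otimes>\<^bsub>?C\<^esub> (\<zero>\<^bsub>A\<^esub>, s \<otimes>\<^bsub>B\<^esub> y) =
            (\<zero>\<^bsub>A\<^esub>, s \<otimes>\<^bsub>B\<^esub> (s \<otimes>\<^bsub>B\<^esub> (x \<otimes>\<^bsub>?D\<^esub> y)))"
        if "x \<in> carrier ?D" "y \<in> carrier ?D" for x y
      proof -
        have x: "x \<in> carrier B" and y: "y \<in> carrier B" using Dsub that by auto
        have "(s \<otimes>\<^bsub>B\<^esub> x) \<otimes>\<^bsub>B\<^esub> (s \<otimes>\<^bsub>B\<^esub> y) = s \<otimes>\<^bsub>B\<^esub> ((x \<otimes>\<^bsub>B\<^esub> s) \<otimes>\<^bsub>B\<^esub> y)"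
          using x y sc by (simp add: B.m_assoc)
        also have "\<dots> = s \<otimes>\<^bsub>B\<^esub> ((s \<otimes>\<^bsub>B\<^esub> x) \<otimes>\<^bsub>B\<^esub> y)"
          using x y sc scomm[OF x] by simp
        also have "\<dots> = s \<otimes>\<^bsub>B\<^esub> (s \<otimes>\<^bsub>B\<^esub> (x \<otimes>\<^bsub>B\<^esub> y))"
          using x y sc by (simp add: B.m_assoc)
        finally show ?thesis by (simp add: amal_simps ipi_simps)
      qed
      show "inj_on (\<lambda>c. (\<zero>\<^bsub>A\<^esub>, s \<otimes>\<^bsub>B\<^esub> (s \<otimes>\<^bsub>B\<^esub> c))) (carrier ?D)"
      proof (rule inj_onI)
        fix x y assume xD: "x \<in> carrier ?D" and yD: "y \<in> carrier ?D"
          and eq: "(\<zero>\<^bsub>A\<^esub>, s \<otimes>\<^bsub>B\<^esub> (s \<otimes>\<^bsub>B\<^esub> x)) = (\<zero>\<^bsub>A\<^esub>, s \<otimes>\<^bsub>B\<^esub> (s \<otimes>\<^bsub>B\<^esub> y))"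
        have x: "x \<in> carrier B" and y: "y \<in> carrier B" using Dsub xD yD by blast+
        have "s \<otimes>\<^bsub>B\<^esub> (s \<otimes>\<^bsub>B\<^esub> x) = s \<otimes>\<^bsub>B\<^esub> (s \<otimes>\<^bsub>B\<^esub> y)" using eq by simp
        hence "s \<otimes>\<^bsub>B\<^esub> x = s \<otimes>\<^bsub>B\<^esub> y" using scancel[of "s \<otimes>\<^bsub>B\<^esub> x" "s \<otimes>\<^bsub>B\<^esub> y"] x y sc by blast
        thus "x = y" using scancel[OF x y] by blast
      qed
      show "armendariz ?C" by fact
    qed
    show "armendariz A \<and> armendariz ?D" using armA armD by blast
  next
    assume arm: "armendariz A \<and> armendariz ?D"
    show "armendariz ?C"
      unfolding armendariz_def
    proof (intro ballI impI allI)
      fix p q i j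
      assume p: "p \<in> carrier (UP ?C)" and q: "q \<in> carrier (UP ?C)" and pq: "p \<otimes>\<^bsub>UP ?C\<^esub> q = \<zero>\<^bsub>UP ?C\<^esub>"
      have p': "p \<in> up ?C" and q': "q \<in> up ?C" using p q by (simp_all add: UP_simps)
      have pc: "\<And>i. p i \<in> carrier ?C" "\<And>i. q i \<in> carrier ?C" using p' q' unfolding up_def by auto
      have 1: "fst (p i) \<otimes>\<^bsub>A\<^esub> fst (q j) = \<zero>\<^bsub>A\<^esub>"
        by (rule hom_arm_zero[OF C A _ _ _ _ _ p q pq]) (use Csub arm in \<open>auto simp: amal_simps\<close>)
      have 2: "snd (p i) \<otimes>\<^bsub>?D\<^esub> snd (q j) = \<zero>\<^bsub>?D\<^esub>"
        by (rule hom_arm_zero[OF C D _ _ _ _ _ p q pq]) (use Csub arm in \<open>auto simp: amal_simps ipi_simps\<close>)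
      show "coeff (UP ?C) p i \<otimes>\<^bsub>?C\<^esub> coeff (UP ?C) q j = \<zero>\<^bsub>?C\<^esub>"
        using 1 2 p' q' by (simp add: UP_simps amal_simps ipi_simps)
    qed
  qed
qed

end
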